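(* Let $C\subseteq\mathbb F_2^n$ be a binary linear code all of whose nonzero words have Hamming weight at least $4$. Let $(e_1,\dots,e_n)$ be an orthonormal basis of a Euclidean space $E$ and let $\Lambda_C$ be the lattice generated by $\mathbb Z^n=\bigoplus_i\mathbb Z e_i$ together with the vectors $\tfrac12\sum_i x_ie_i$, where $x\in\{0,1\}^n$ runs through the representatives of the words of $C$. Let $w_4$ be the number of words of $C$ of weight $4$, and let $t$ be the number of $2$-element subsets $\{i,j\}\subseteq\{1,\dots,n\}$ such that $i$ and $j$ do not both lie in the support of a single weight-$4$ word of $C$. Then $$s(\Lambda_C)=n+8w_4\quad\text{and}\quad \operatorname{perf}(\Lambda_C)=\frac{n(n+1)}2-t.$$
   Context: For a lattice $\Lambda$, $\min\Lambda=\min_{x\in\Lambda\setminus\{0\}}x\cdot x$, $S(\Lambda)$ is the set of vectors attaining the minimum, and $s(\Lambda)=|S(\Lambda)|/2$. Perfection rank: let $\mathcal S^n$ be the space of real symmetric $n\times n$ matrices and $\mathcal R=\{G\in\mathcal S^n: x^tGx\ge 1\ \forall x\in\mathbb Z^n\setminus\{0\}\}$ the Ryshkov polyhedron (a locally finite polyhedron). If a lattice has minimum $1$ and $G$ is the Gram matrix of one of its bases, $G$ lies in the relative interior of a face of $\mathcal R$ of some dimension $k$ (independent of the basis); the perfection rank is $\operatorname{perf}(\Lambda)=\dim\mathcal S^n-k=\frac{n(n+1)}2-k$ (equivalently, the dimension of the span of $\{xx^t\}$ over the minimal vectors $x$ in coordinates). Perfection rank is invariant under scaling. *)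

theory Defs
  imports "HOL-Analysis.Analysis" "HOL-Library.Z2"
begin

text \<open>Binary linear codes of length CARD('n): subsets of F_2^n closed under the
  F_2-vector space operations (for F_2, closure under scalars is automatic).\<close>
definition binary_linear_code :: "(bit ^ 'n) set \<Rightarrow> bool" where
  "binary_linear_code C \<longleftrightarrow> 0 \<in> C \<and> (\<forall>x\<in>C. \<forall>y\<in>C. x + y \<in> C)"

definition code_supp :: "bit ^ 'n \<Rightarrow> 'n set" where
  "code_supp x = {i. x $ i \<noteq> 0}"

definition hamming_weight :: "bit ^ 'n \<Rightarrow> nat" where
  "hamming_weight x = card (code_supp x)"

definition lattice_gen :: "(real ^ 'n) set \<Rightarrow> (real ^ 'n) set" where
  "lattice_gen G = {(\<Sum>g\<in>F. of_int (k g) *\<^sub>R g) | F k. finite F \<and> F \<subseteq> G}"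

definition code_lattice :: "(bit ^ 'n) set \<Rightarrow> (real ^ 'n) set" where
  "code_lattice C = lattice_gen ({axis i 1 | i. True} \<union>
      {(\<chi> i. if x $ i = 1 then 1/2 else 0) | x. x \<in> C})"

definition lat_min :: "(real ^ 'n) set \<Rightarrow> real" where
  "lat_min L = Inf {v \<bullet> v | v. v \<in> L \<and> v \<noteq> 0}"

definition min_vectors :: "(real ^ 'n) set \<Rightarrow> (real ^ 'n) set" where
  "min_vectors L = {v \<in> L. v \<noteq> 0 \<and> v \<bullet> v = lat_min L}"

definition kissing_s :: "(real ^ 'n) set \<Rightarrow> nat" where
  "kissing_s L = card (min_vectors L) div 2"

definition outer :: "real ^ 'n \<Rightarrow> real ^ 'n ^ 'n" where
  "outer x = (\<chi> i j. x $ i * x $ j)"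

definition perf_rank :: "(real ^ 'n) set \<Rightarrow> nat" where
  "perf_rank L = dim (outer ` min_vectors L)"

end

theory Submission
  imports Defs
begin


lemma lg_gen: "g \<in> G \<Longrightarrow> g \<in> lattice_gen G"
  unfolding lattice_gen_def
  by (rule CollectI, rule exI[of _ "{g}"], rule exI[of _ "\<lambda>_. 1"]) simp

lemma lg_neg: "a \<in> lattice_gen G \<Longrightarrow> - a \<in> lattice_gen G"
proof -
  assume "a \<in> lattice_gen G"
  then obtain F k where F: "finite F" "F \<subseteq> G" "a = (\<Sum>g\<in>F. of_int (k g) *\<^sub>R g)"
    unfolding lattice_gen_def by blast
  have "- a = (\<Sum>g\<in>F. of_int (- k g) *\<^sub>R g)" using F by (simp add: sum_negf)
  thus ?thesis using F unfolding lattice_gen_def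
    by (intro CollectI exI[of _ F] exI[of _ "\<lambda>g. - k g"]) auto
qed

lemma lg_add: "a \<in> lattice_gen G \<Longrightarrow> b \<in> lattice_gen G \<Longrightarrow> a + b \<in> lattice_gen G"
proof -
  assume "a \<in> lattice_gen G" "b \<in> lattice_gen G"
  then obtain F k F2 k2 where F: "finite F" "F \<subseteq> G" "a = (\<Sum>g\<in>F. of_int (k g) *\<^sub>R g)"
    and F2: "finite F2" "F2 \<subseteq> G" "b = (\<Sum>g\<in>F2. of_int (k2 g) *\<^sub>R g)"
    unfolding lattice_gen_def by blast
  define K where "K g = (if g \<in> F then k g else 0) + (if g \<in> F2 then k2 g else 0)" for g
  have 1: "(\<Sum>g\<in>F \<union> F2. of_int (if g \<in> F then k g else 0) *\<^sub>R g) = a"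
    unfolding F(3) by (rule sum.mono_neutral_cong_right) (use F F2 in auto)
  have 2: "(\<Sum>g\<in>F \<union> F2. of_int (if g \<in> F2 then k2 g else 0) *\<^sub>R g) = b"
    unfolding F2(3) by (rule sum.mono_neutral_cong_right) (use F F2 in auto)
  have "a + b = (\<Sum>g\<in>F \<union> F2. of_int (K g) *\<^sub>R g)"
    unfolding K_def of_int_add scaleR_add_left sum.distrib 1 2 ..
  thus ?thesis using F F2 unfolding lattice_gen_def
    by (intro CollectI exI[of _ "F \<union> F2"] exI[of _ K]) auto
qed

lemma lg_subset:
  assumes "G \<subseteq> S" "0 \<in> S" "\<And>a b. a \<in> S \<Longrightarrow> b \<in> S \<Longrightarrow> a + b \<in> S"
    "\<And>a k. a \<in> S \<Longrightarrow> of_int k *\<^sub>R a \<in> S"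
  shows "lattice_gen G \<subseteq> S"
proof
  fix v assume "v \<in> lattice_gen G"
  then obtain F k where F: "finite F" "F \<subseteq> G" "v = (\<Sum>g\<in>F. of_int (k g) *\<^sub>R g)"
    unfolding lattice_gen_def by blast
  have "F \<subseteq> G \<Longrightarrow> (\<Sum>g\<in>F. of_int (k g) *\<^sub>R g) \<in> S" using F(1)
    by (induction F rule: finite_induct) (use assms in auto)
  thus "v \<in> S" using F by simp
qed

definition hv :: "bit ^ 'n \<Rightarrow> real ^ 'n" where
  "hv x = (\<chi> i. if x $ i = 1 then 1/2 else 0)"

definition SL :: "(bit ^ 'n) set \<Rightarrow> (real ^ 'n) set" where
  "SL C = {v. \<exists>x\<in>C. \<forall>i. v $ i - hv x $ i \<in> \<int>}"

lemma code_lattice_alt: "code_lattice C = lattice_gen ({axis i 1 | i. True} \<union> hv ` C)"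
  unfolding code_lattice_def hv_def by (simp add: image_def setcompr_eq_image)

lemma SL_closed:
  assumes C: "binary_linear_code C"
  shows "code_lattice C \<subseteq> SL C"
  unfolding code_lattice_alt
proof (rule lg_subset)
  have C0: "0 \<in> C" and Cadd: "\<And>x y. x \<in> C \<Longrightarrow> y \<in> C \<Longrightarrow> x + y \<in> C"
    using C unfolding binary_linear_code_def by auto
  show "{axis i 1 |i. True} \<union> hv ` C \<subseteq> SL C"
  proof
    fix v assume "v \<in> {axis i 1 |i. True} \<union> hv ` C"
    then show "v \<in> SL C"
    proof
      assume "v \<in> {axis i 1 |i. True}"
      then obtain i where "v = axis i 1" by blast
      then show ?thesis unfolding SL_def using C0
        by (intro CollectI bexI[of _ 0]) (auto simp: hv_def axis_def)
    next
      assume "v \<in> hv ` C" then obtain x where "x \<in> C" "v = hv x" by blast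
      then show ?thesis unfolding SL_def by (intro CollectI bexI[of _ x]) auto
    qed
  qed
  show "0 \<in> SL C" unfolding SL_def using C0 by (intro CollectI bexI[of _ 0]) (auto simp: hv_def)
  show "a + b \<in> SL C" if hab: "a \<in> SL C" "b \<in> SL C" for a b
  proof -
    obtain x y where x: "x \<in> C" "\<forall>i. a $ i - hv x $ i \<in> \<int>" and y: "y \<in> C" "\<forall>i. b $ i - hv y $ i \<in> \<int>"
      using hab unfolding SL_def mem_Collect_eq by blast
    have "\<forall>i. (a + b) $ i - hv (x + y) $ i \<in> \<int>"
    proof
      fix i
      have e: "(a+b) $ i - hv (x + y) $ i = (a $ i - hv x $ i) + (b $ i - hv y $ i)
          + (if x $ i = 1 \<and> y $ i = 1 then 1 else 0)"
        by (cases "x $ i"; cases "y $ i") (auto simp: hv_def)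
      show "(a + b) $ i - hv (x + y) $ i \<in> \<int>" unfolding e using x y by auto
    qed
    then show ?thesis unfolding SL_def using Cadd[OF x(1) y(1)] by blast
  qed
  show "of_int k *\<^sub>R a \<in> SL C" if hab: "a \<in> SL C" for a k
  proof -
    obtain x where x: "x \<in> C" "\<forall>i. a $ i - hv x $ i \<in> \<int>"
      using hab unfolding SL_def mem_Collect_eq by blast
    show ?thesis
    proof (cases "even k")
      case True
      then obtain m where m: "k = 2 * m" by blast
      have "\<forall>i. (of_int k *\<^sub>R a) $ i - hv 0 $ i \<in> \<int>"
      proof
        fix i
        have "(of_int k *\<^sub>R a) $ i - hv 0 $ i = of_int k * (a $ i - hv x $ i) + of_int m * (2 * hv x $ i)"
          by (simp add: hv_def m algebra_simps)
        moreover have "2 * hv x $ i \<in> \<int>" by (simp add: hv_def)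
        ultimately show "(of_int k *\<^sub>R a) $ i - hv 0 $ i \<in> \<int>" using x by simp
      qed
      then show ?thesis unfolding SL_def using C0 by blast
    next
      case False
      then obtain m where m: "k = 2 * m + 1" by (metis odd_two_times_div_two_succ)
      have "\<forall>i. (of_int k *\<^sub>R a) $ i - hv x $ i \<in> \<int>"
      proof
        fix i
        have "(of_int k *\<^sub>R a) $ i - hv x $ i = of_int k * (a $ i - hv x $ i) + of_int m * (2 * hv x $ i)"
          by (simp add: hv_def m algebra_simps)
        moreover have "2 * hv x $ i \<in> \<int>" by (simp add: hv_def)
        ultimately show "(of_int k *\<^sub>R a) $ i - hv x $ i \<in> \<int>" using x by simp
      qed
      then show ?thesis unfolding SL_def using x by blast
    qed
  qed
qed



lemma int_sq_ge1: "(z::real) \<in> \<int> \<Longrightarrow> z \<noteq> 0 \<Longrightarrow> 1 \<le> z^2"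
proof -
  assume "z \<in> \<int>" "z \<noteq> 0"
  then have "1 \<le> \<bar>z\<bar>" by (simp add: Ints_nonzero_abs_ge1)
  then have "1 * 1 \<le> \<bar>z\<bar> * \<bar>z\<bar>" by (intro mult_mono) auto
  thus ?thesis by (simp add: power2_eq_square)
qed

lemma half_sq_ge: "(a::real) - 1/2 \<in> \<int> \<Longrightarrow> 1/4 \<le> a^2"
proof -
  assume "a - 1/2 \<in> \<int>"
  then obtain n :: int where n: "a - 1/2 = of_int n" by (elim Ints_cases) 
  have "1/2 \<le> \<bar>a\<bar>"
  proof (cases "n \<ge> 0")
    case True then have "real_of_int n \<ge> 0" by simp
    then show ?thesis using n by linarith
  next
    case False then have "real_of_int n \<le> -1" by simp
    then show ?thesis using n by linarith
  qed
  then have "1/2 * (1/2) \<le> \<bar>a\<bar> * \<bar>a\<bar>" by (intro mult_mono) auto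
  thus ?thesis by (simp add: power2_eq_square)
qed

definition M1 :: "(real ^ 'n) set" where
  "M1 = range (\<lambda>i. axis i 1) \<union> range (\<lambda>i. axis i (-1))"

definition sv :: "bit ^ 'n \<Rightarrow> 'n set \<Rightarrow> real ^ 'n" where
  "sv x T = (\<chi> i. if i \<in> code_supp x then (if i \<in> T then 1/2 else -1/2) else 0)"

definition M2 :: "(bit ^ 'n) set \<Rightarrow> (real ^ 'n) set" where
  "M2 C = (\<Union>x\<in>{x\<in>C. hamming_weight x = 4}. sv x ` Pow (code_supp x))"

lemma inner_sq: "v \<bullet> v = (\<Sum>i\<in>UNIV. (v $ i)^2)" for v :: "real ^ 'n"
  by (simp add: inner_vec_def power2_eq_square)

lemma hv_supp: "hv x $ i = (if i \<in> code_supp x then 1/2 else 0)"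
  by (simp add: hv_def code_supp_def)

lemma SL_norm:
  assumes wt: "\<forall>x\<in>C. x \<noteq> 0 \<longrightarrow> hamming_weight x \<ge> 4"
    and v: "v \<in> SL C" "v \<noteq> 0"
  shows "1 \<le> v \<bullet> v \<and> (v \<bullet> v = 1 \<longrightarrow> v \<in> M1 \<union> M2 C)"
proof -
  obtain x where x: "x \<in> C" "\<forall>i. v $ i - hv x $ i \<in> \<int>"
    using v(1) unfolding SL_def by blast
  show ?thesis
  proof (cases "x = 0")
    case True
    then have vi: "v $ i \<in> \<int>" for i using x(2) by (simp add: hv_def)
    obtain j where j: "v $ j \<noteq> 0" using v(2) by (auto simp: vec_eq_iff)
    have split: "v \<bullet> v = (v $ j)^2 + (\<Sum>i\<in>UNIV - {j}. (v $ i)^2)"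
      unfolding inner_sq by (simp add: sum.remove)
    have r0: "0 \<le> (\<Sum>i\<in>UNIV - {j}. (v $ i)^2)" by (intro sum_nonneg) auto
    have j1: "1 \<le> (v $ j)^2" using int_sq_ge1[OF vi j] .
    have "v \<bullet> v = 1 \<longrightarrow> v \<in> M1"
    proof
      assume "v \<bullet> v = 1"
      then have "(v $ j)^2 = 1" "(\<Sum>i\<in>UNIV - {j}. (v $ i)^2) = 0" using split r0 j1 by linarith+
      then have a: "v $ j = 1 \<or> v $ j = -1" and b: "\<forall>i\<in>UNIV - {j}. v $ i = 0"
        by (auto simp: power2_eq_1_iff sum_nonneg_eq_0_iff)
      have "v = axis j (v $ j)" using b by (auto simp: vec_eq_iff axis_def)
      then show "v \<in> M1" using a unfolding M1_def by auto
    qed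
    then show ?thesis using split r0 j1 by auto
  next
    case False
    define S where "S = code_supp x"
    have cS: "card S \<ge> 4" using wt x(1) False unfolding S_def hamming_weight_def by auto
    have vS: "v $ i - 1/2 \<in> \<int>" if "i \<in> S" for i using x(2) that
      by (metis hv_supp S_def)
    have ge: "1/4 \<le> (v $ i)^2" if "i \<in> S" for i using half_sq_ge[OF vS[OF that]] .
    have split: "v \<bullet> v = (\<Sum>i\<in>S. (v $ i)^2) + (\<Sum>i\<in>UNIV - S. (v $ i)^2)"
      unfolding inner_sq by (simp add: sum.subset_diff[of S UNIV])
    have r0: "0 \<le> (\<Sum>i\<in>UNIV - S. (v $ i)^2)" by (intro sum_nonneg) auto
    have s1: "(\<Sum>i\<in>S. (1/4::real)) \<le> (\<Sum>i\<in>S. (v $ i)^2)" using ge by (intro sum_mono) auto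
    have s2: "(\<Sum>i\<in>S. (1/4::real)) = card S / 4" by simp
    have cS': "(4::real) \<le> card S" using cS by simp
    have "v \<bullet> v = 1 \<longrightarrow> v \<in> M2 C"
    proof
      assume "v \<bullet> v = 1"
      then have c4: "card S = 4" using split r0 s1 s2 cS' by linarith
      then have e: "(\<Sum>i\<in>S. (v $ i)^2 - 1/4) = 0" "(\<Sum>i\<in>UNIV - S. (v $ i)^2) = 0"
        using split r0 s1 s2 \<open>v \<bullet> v = 1\<close> by (simp_all add: sum_subtractf)
      have fS: "finite S" by simp
      have q: "(v $ i)^2 - 1/4 = 0" if "i \<in> S" for i
        using e(1) ge sum_nonneg_eq_0_iff[OF fS, of "\<lambda>i. (v $ i)^2 - 1/4"] that by auto
      have z: "v $ i = 0" if "i \<notin> S" for i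
        using e(2) sum_nonneg_eq_0_iff[of "UNIV - S" "\<lambda>i. (v $ i)^2"] that by auto
      have h: "v $ i = 1/2 \<or> v $ i = -1/2" if "i \<in> S" for i
      proof -
        have "(v $ i)^2 = (1/2)^2" using q[OF that] by (simp add: power2_eq_square)
        thus ?thesis by (simp add: power2_eq_iff)
      qed
      define T where "T = {i\<in>S. v $ i = 1/2}"
      have "v = sv x T" using h z unfolding sv_def T_def S_def[symmetric]
        by (auto simp: vec_eq_iff)
      moreover have "T \<subseteq> code_supp x" unfolding T_def S_def by auto
      moreover have "hamming_weight x = 4" using c4 unfolding S_def hamming_weight_def .
      ultimately show "v \<in> M2 C" unfolding M2_def using x(1) by blast
    qed
    then show ?thesis using split r0 s1 s2 cS' by auto
  qed
qed



lemma lg_zero: "0 \<in> lattice_gen G"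
  unfolding lattice_gen_def by (intro CollectI exI[of _ "{}"]) auto

lemma lg_sum: "finite A \<Longrightarrow> (\<And>a. a \<in> A \<Longrightarrow> f a \<in> lattice_gen G) \<Longrightarrow> sum f A \<in> lattice_gen G"
  by (induction A rule: finite_induct) (auto intro: lg_zero lg_add)

lemma M_sub:
  assumes "binary_linear_code C"
  shows "M1 \<union> M2 C \<subseteq> code_lattice C"
proof
  let ?G = "{axis i 1 | i. True} \<union> hv ` C"
  fix v assume "v \<in> M1 \<union> M2 C"
  then show "v \<in> code_lattice C"
  proof
    assume "v \<in> M1"
    then obtain i where "v = axis i 1 \<or> v = axis i (-1)" unfolding M1_def by auto
    moreover have "axis i 1 \<in> lattice_gen ?G" by (rule lg_gen) auto
    moreover have "axis i (-1) = - axis i (1::real)" by (simp add: vec_eq_iff axis_def)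
    ultimately show ?thesis unfolding code_lattice_alt using lg_neg by metis
  next
    assume "v \<in> M2 C"
    then obtain x T where x: "x \<in> C" "T \<subseteq> code_supp x" "v = sv x T" unfolding M2_def by auto
    have c: "(\<Sum>k\<in>A. - axis k (1::real)) $ j = - (if j \<in> A then 1 else 0)" for A j
      by (simp add: sum_negf axis_def sum.delta sum.delta' if_distrib cong: if_cong)
    have e: "sv x T = hv x + (\<Sum>i\<in>code_supp x - T. - axis i 1)"
      unfolding vec_eq_iff by (intro allI, simp only: vector_add_component c) (auto simp: sv_def hv_supp)
    have "hv x \<in> lattice_gen ?G" using x(1) by (intro lg_gen) auto
    moreover have "(\<Sum>i\<in>code_supp x - T. - axis i 1) \<in> lattice_gen ?G"
      by (intro lg_sum lg_neg lg_gen) auto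
    ultimately show ?thesis unfolding code_lattice_alt x(3) e by (rule lg_add)
  qed
qed

lemma M_norm:
  assumes "v \<in> M1 \<union> M2 C"
  shows "v \<bullet> v = 1 \<and> v \<noteq> 0"
  using assms
proof
  assume "v \<in> M1"
  then obtain i where "v = axis i 1 \<or> v = axis i (-1)" unfolding M1_def by auto
  then show ?thesis
    by (auto simp: inner_axis_axis)
next
  assume "v \<in> M2 C"
  then obtain x T where x: "hamming_weight x = 4" "T \<subseteq> code_supp x" "v = sv x T" unfolding M2_def by auto
  have "v \<bullet> v = (\<Sum>i\<in>UNIV. if i \<in> code_supp x then 1/4 else 0)"
    unfolding inner_sq x(3) by (intro sum.cong) (auto simp: sv_def power2_eq_square)
  also have "\<dots> = card (code_supp x) / 4" by (simp add: sum.If_cases)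
  finally have n: "v \<bullet> v = 1" using x(1) unfolding hamming_weight_def by simp
  then show ?thesis by auto
qed

lemma min_vecs:
  assumes C: "binary_linear_code C" and wt: "\<forall>x\<in>C. x \<noteq> 0 \<longrightarrow> hamming_weight x \<ge> 4"
  shows "lat_min (code_lattice C) = 1" "min_vectors (code_lattice C) = M1 \<union> M2 C"
proof -
  let ?L = "code_lattice C"
  obtain i :: 'a where True by blast
  have "axis i 1 \<in> M1" unfolding M1_def by auto
  then have a: "axis i 1 \<in> ?L" "axis i 1 \<bullet> axis i (1::real) = 1" "axis i (1::real) \<noteq> 0"
    using M_sub[OF C] M_norm by auto
  show lm: "lat_min ?L = 1" unfolding lat_min_def
  proof (rule cInf_eq_minimum)
    show "1 \<in> {v \<bullet> v |v. v \<in> ?L \<and> v \<noteq> 0}" using a by force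
    show "1 \<le> y" if "y \<in> {v \<bullet> v |v. v \<in> ?L \<and> v \<noteq> 0}" for y
      using that SL_norm[OF wt] SL_closed[OF C] by blast
  qed
  show "min_vectors ?L = M1 \<union> M2 C"
    unfolding min_vectors_def lm
    using SL_norm[OF wt] SL_closed[OF C] M_sub[OF C] M_norm by blast
qed



lemma supp_inj: "code_supp x = code_supp y \<Longrightarrow> x = y"
proof -
  assume h: "code_supp x = code_supp y"
  show "x = y" unfolding vec_eq_iff
  proof
    fix i
    have "(x $ i \<noteq> 0) = (y $ i \<noteq> 0)" using h unfolding code_supp_def by (simp add: set_eq_iff)
    then show "x $ i = y $ i" by (metis bit_not_zero_iff)
  qed
qed

lemma sv_supp: "(sv x T $ i \<noteq> 0) \<longleftrightarrow> i \<in> code_supp x"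
  by (simp add: sv_def)

lemma card_M1: "card (M1 :: (real ^ 'n) set) = 2 * CARD('n)"
proof -
  have i1: "inj (\<lambda>i::'n. axis i (1::real))" by (auto intro: injI simp: axis_eq_axis)
  have i2: "inj (\<lambda>i::'n. axis i (-1::real))" by (auto intro: injI simp: axis_eq_axis)
  have d: "range (\<lambda>i::'n. axis i (1::real)) \<inter> range (\<lambda>i. axis i (-1)) = {}"
    by (auto simp: axis_eq_axis)
  show ?thesis unfolding M1_def
    by (subst card_Un_disjoint) (use d in \<open>auto simp: card_image[OF i1] card_image[OF i2]\<close>)
qed

lemma fin_W: "finite {x \<in> (C :: (bit ^ 'n) set). hamming_weight x = 4}"
proof (rule finite_imageD)
  show "finite (code_supp ` {x \<in> (C :: (bit ^ 'n) set). hamming_weight x = 4})" by simp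
  show "inj_on code_supp {x \<in> (C :: (bit ^ 'n) set). hamming_weight x = 4}" by (auto intro: inj_onI supp_inj)
qed

lemma fin_M2: "finite (M2 C :: (real ^ 'n) set)"
  unfolding M2_def by (rule finite_UN_I[OF fin_W]) simp

lemma card_M2:
  "card (M2 C :: (real ^ 'n) set) = 16 * card {x \<in> C. hamming_weight x = 4}"
proof -
  define W where "W = {x \<in> (C :: (bit ^ 'n) set). hamming_weight x = 4}"
  have fW: "finite W" unfolding W_def by (rule fin_W)
  have inj: "inj_on (sv x) (Pow (code_supp x))" for x
  proof (rule inj_onI)
    fix T1 T2 assume T: "T1 \<in> Pow (code_supp x)" "T2 \<in> Pow (code_supp x)" "sv x T1 = sv x T2"
    have "i \<in> T1 \<longleftrightarrow> i \<in> T2" for i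
    proof -
      have "sv x T1 $ i = sv x T2 $ i" using T(3) by simp
      thus ?thesis using T(1,2) by (auto simp: sv_def split: if_splits)
    qed
    thus "T1 = T2" by auto
  qed
  have c16: "card (sv x ` Pow (code_supp x)) = 16" if "x \<in> W" for x
  proof -
    have "card (code_supp x) = 4" using that unfolding W_def hamming_weight_def by simp
    thus ?thesis by (simp add: card_image[OF inj] card_Pow)
  qed
  have disj: "sv x ` Pow (code_supp x) \<inter> sv y ` Pow (code_supp y) = {}" if "x \<noteq> y" for x y
  proof (rule ccontr)
    assume "sv x ` Pow (code_supp x) \<inter> sv y ` Pow (code_supp y) \<noteq> {}"
    then obtain T T' where "sv x T = sv y T'" by blast
    then have "code_supp x = code_supp y" using sv_supp by (metis set_eqI)
    then show False using that supp_inj by blast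
  qed
  have "card (M2 C) = (\<Sum>x\<in>W. card (sv x ` Pow (code_supp x)))"
    unfolding M2_def W_def[symmetric]
    by (rule card_UN_disjoint) (use fW disj in auto)
  also have "\<dots> = (\<Sum>x\<in>W. 16)" using c16 by simp
  finally show ?thesis unfolding W_def by simp
qed

lemma card_M:
  "card (M1 \<union> M2 C :: (real ^ 'n) set) = 2 * CARD('n) + 16 * card {x \<in> C. hamming_weight x = 4}"
proof -
  have d: "M1 \<inter> M2 C = {}"
  proof (rule ccontr)
    assume "M1 \<inter> M2 C \<noteq> {}"
    then obtain v where v: "v \<in> M1" "v \<in> M2 C" by blast
    from v(2) obtain x T where x: "hamming_weight x = 4" "v = sv x T" unfolding M2_def by auto
    have "code_supp x \<noteq> {}" using x(1) unfolding hamming_weight_def by (metis card.empty zero_neq_numeral)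
    then obtain i where i: "i \<in> code_supp x" by blast
    have "v $ i = 1/2 \<or> v $ i = -1/2" using i x(2) by (simp add: sv_def)
    moreover from v(1) obtain j where "v = axis j 1 \<or> v = axis j (-1)" unfolding M1_def by auto
    then have "v $ i = 0 \<or> v $ i = 1 \<or> v $ i = -1" by (cases "i = j") (auto simp: axis_def)
    ultimately show False by linarith
  qed
  have f1: "finite (M1 :: (real ^ 'n) set)" unfolding M1_def by simp
  have f2: "finite (M2 C :: (real ^ 'n) set)" by (rule fin_M2)
  have "card (M1 :: (real^'n) set) = 2*CARD('n)" by (rule card_M1)
  then show ?thesis using card_Un_disjoint[OF f1 f2 d] card_M2[of C] by simp
qed



definition mt :: "'n set \<Rightarrow> real ^ 'n ^ 'n" where
  "mt P = (\<chi> a b. if {a, b} = P then 1 else 0)"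

definition Cov :: "(bit ^ 'n) set \<Rightarrow> 'n set set" where
  "Cov C = {P. \<exists>i j. i \<noteq> j \<and> P = {i, j} \<and> (\<exists>x\<in>C. hamming_weight x = 4 \<and> i \<in> code_supp x \<and> j \<in> code_supp x)}"

definition DD :: "(bit ^ 'n) set \<Rightarrow> 'n set set" where
  "DD C = range (\<lambda>i. {i}) \<union> Cov C"

lemma DD_form: "P \<in> DD C \<Longrightarrow> \<exists>a b. P = {a, b}"
  unfolding DD_def Cov_def by auto

lemma mt_inj: "inj_on mt (DD C)"
proof (rule inj_onI)
  fix P Q assume P: "P \<in> DD C" "Q \<in> DD C" "mt P = mt Q"
  obtain a b where ab: "P = {a, b}" using DD_form[OF P(1)] by blast
  have "mt P $ a $ b = mt Q $ a $ b" using P(3) by simp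
  then have "{a, b} = Q" using ab by (simp add: mt_def split: if_splits)
  thus "P = Q" using ab by simp
qed

lemma fin_DD: "finite (DD C)"
  by (rule finite_subset[of _ "UNIV"]) auto

lemma mt_indep: "independent (mt ` DD C)"
  unfolding independent_explicit
proof (intro conjI allI impI ballI)
  show "finite (mt ` DD C)" using fin_DD by simp
  fix c v
  assume s: "(\<Sum>w\<in>mt ` DD C. c w *\<^sub>R w) = 0" and v: "v \<in> mt ` DD C"
  then obtain P where P: "P \<in> DD C" "v = mt P" by blast
  obtain a b where ab: "P = {a, b}" using DD_form[OF P(1)] by blast
  have "0 = (\<Sum>w\<in>mt ` DD C. c w *\<^sub>R w) $ a $ b" using s by simp
  also have "\<dots> = (\<Sum>Q\<in>DD C. c (mt Q) * (mt Q $ a $ b))"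
    by (simp add: sum.reindex[OF mt_inj])
  also have "\<dots> = (\<Sum>Q\<in>DD C. if {a, b} = Q then c (mt Q) else 0)"
    by (intro sum.cong) (auto simp: mt_def)
  also have "\<dots> = c (mt P)" using P(1) ab fin_DD by (simp add: sum.delta)
  finally show "c v = 0" using P by simp
qed

lemma in_span_mt:
  fixes A :: "real ^ 'n ^ 'n"
  assumes sym: "\<And>a b. A $ a $ b = A $ b $ a"
    and z: "\<And>a b. {a, b} \<notin> DD C \<Longrightarrow> A $ a $ b = 0"
  shows "A \<in> span (mt ` DD C)"
proof -
  define c where "c P = A $ fst (SOME p. {fst p, snd p} = P) $ snd (SOME p. {fst p, snd p} = P)" for P :: "'n set"
  have cab: "c {a, b} = A $ a $ b" for a b
  proof -
    have "\<exists>p. {fst p, snd p} = {a, b}" by (rule exI[of _ "(a, b)"]) simp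
    then have "{fst (SOME p. {fst p, snd p} = {a, b}), snd (SOME p. {fst p, snd p} = {a, b})} = {a, b}"
      by (rule someI_ex)
    then show ?thesis unfolding c_def using sym by (auto simp: doubleton_eq_iff)
  qed
  have ent: "A $ a $ b = (\<Sum>P\<in>DD C. c P *\<^sub>R mt P) $ a $ b" for a b
  proof -
    have "(\<Sum>P\<in>DD C. c P *\<^sub>R mt P) $ a $ b = (\<Sum>P\<in>DD C. if {a, b} = P then c P else 0)"
      unfolding sum_component vector_scaleR_component by (intro sum.cong) (auto simp: mt_def)
    also have "\<dots> = (if {a, b} \<in> DD C then c {a, b} else 0)" using fin_DD by (simp add: sum.delta)
    also have "\<dots> = A $ a $ b" using cab z by auto
    finally show "A $ a $ b = (\<Sum>P\<in>DD C. c P *\<^sub>R mt P) $ a $ b" by simp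
  qed
  have "A = (\<Sum>P\<in>DD C. c P *\<^sub>R mt P)" using ent by (simp add: vec_eq_iff)
  also have "\<dots> \<in> span (mt ` DD C)"
    by (intro span_sum span_scale span_base) auto
  finally show ?thesis .
qed



lemma outer_in_span:
  assumes "v \<in> M1 \<union> M2 C"
  shows "outer v \<in> span (mt ` DD C)"
proof (rule in_span_mt)
  show "outer v $ a $ b = outer v $ b $ a" for a b by (simp add: outer_def mult.commute)
  show "outer v $ a $ b = 0" if ab: "{a, b} \<notin> DD C" for a b
  proof (rule ccontr)
    assume nz: "outer v $ a $ b \<noteq> 0"
    then have va: "v $ a \<noteq> 0" and vb: "v $ b \<noteq> 0" by (auto simp: outer_def)
    from assms show False
    proof
      assume "v \<in> M1"
      then obtain j where "v = axis j 1 \<or> v = axis j (-1)" unfolding M1_def by auto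
      then have "a = j" "b = j" using va vb by (auto simp: axis_def split: if_splits)
      then show False using ab unfolding DD_def by auto
    next
      assume "v \<in> M2 C"
      then obtain x T where x: "x \<in> C" "hamming_weight x = 4" "v = sv x T" unfolding M2_def by auto
      have "a \<in> code_supp x" "b \<in> code_supp x" using va vb x(3) sv_supp by auto
      then have "{a, b} \<in> DD C"
        using x unfolding DD_def Cov_def by (cases "a = b") blast+
      then show False using ab by simp
    qed
  qed
qed

lemma mt_in_span:
  assumes "P \<in> DD C"
  shows "mt P \<in> span (outer ` (M1 \<union> M2 C))"
proof -
  { fix i :: 'a
    have "axis i 1 \<in> M1" unfolding M1_def by auto
    moreover have "mt {i} = outer (axis i 1)"
      by (auto simp: vec_eq_iff mt_def outer_def axis_def)
    ultimately have "mt {i} \<in> span (outer ` (M1 \<union> M2 C))" by (intro span_base) auto }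
  note sing = this
  show ?thesis using assms unfolding DD_def
  proof
    assume "P \<in> range (\<lambda>i. {i})" then show ?thesis using sing by auto
  next
    assume "P \<in> Cov C"
    then obtain i j x where ij: "i \<noteq> j" "P = {i, j}" "x \<in> C" "hamming_weight x = 4"
      "i \<in> code_supp x" "j \<in> code_supp x" unfolding Cov_def by blast
    define S where "S = code_supp x"
    have inM: "sv x T \<in> M1 \<union> M2 C" if "T \<subseteq> S" for T
      using that ij(3,4) unfolding M2_def S_def by blast
    have sp: "outer (sv x T) \<in> span (outer ` (M1 \<union> M2 C))" if "T \<subseteq> S" for T
      using inM[OF that] by (intro span_base) auto
    have eq: "mt P = outer (sv x S) - outer (sv x (S - {j})) - outer (sv x (S - {i})) + outer (sv x (S - {i, j}))"
    proof -
      have "mt P $ a $ b = (outer (sv x S) - outer (sv x (S - {j})) - outer (sv x (S - {i})) + outer (sv x (S - {i, j}))) $ a $ b" for a b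
        using ij(1,5,6) unfolding ij(2) S_def
        by (cases "a \<in> code_supp x"; cases "b \<in> code_supp x")
          (auto simp: mt_def outer_def sv_def doubleton_eq_iff)
      then show ?thesis by (simp add: vec_eq_iff)
    qed
    show ?thesis unfolding eq
      by (intro span_add span_diff sp) auto
  qed
qed



lemma card_DD:
  fixes C :: "(bit ^ 'n) set"
  defines "t \<equiv> card {P :: 'n set. \<exists>i j. i \<noteq> j \<and> P = {i, j} \<and>
              \<not> (\<exists>x\<in>C. hamming_weight x = 4 \<and> i \<in> code_supp x \<and> j \<in> code_supp x)}"
  shows "card (DD C) = CARD('n) * (CARD('n) + 1) div 2 - t"
proof -
  define AP where "AP = {P :: 'n set. \<exists>i j. i \<noteq> j \<and> P = {i, j}}"
  define TS where "TS = {P :: 'n set. \<exists>i j. i \<noteq> j \<and> P = {i, j} \<and>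
              \<not> (\<exists>x\<in>C. hamming_weight x = 4 \<and> i \<in> code_supp x \<and> j \<in> code_supp x)}"
  have AP2: "AP = {P. P \<subseteq> UNIV \<and> card P = 2}" unfolding AP_def by (auto simp: card_2_iff)
  have cAP: "card AP = CARD('n) choose 2" unfolding AP2 using n_subsets[of "UNIV::'n set" 2] by simp
  have un: "AP = Cov C \<union> TS" unfolding AP_def TS_def Cov_def by blast
  have dj: "Cov C \<inter> TS = {}"
    unfolding TS_def Cov_def by (auto simp: doubleton_eq_iff)
  have "card AP = card (Cov C) + t" unfolding un t_def TS_def[symmetric]
    by (rule card_Un_disjoint) (use dj in auto)
  then have cC: "card (Cov C) = (CARD('n) choose 2) - t" using cAP by simp
  have tle: "t \<le> CARD('n) choose 2" using cAP \<open>card AP = card (Cov C) + t\<close> by simp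
  have dj2: "range (\<lambda>i::'n. {i}) \<inter> Cov C = {}" unfolding Cov_def by (auto simp: doubleton_eq_iff)
  have "card (DD C) = card (range (\<lambda>i::'n. {i})) + card (Cov C)" unfolding DD_def
    by (rule card_Un_disjoint) (use dj2 in auto)
  also have "card (range (\<lambda>i::'n. {i})) = CARD('n)" by (simp add: card_image)
  finally have "card (DD C) = CARD('n) + ((CARD('n) choose 2) - t)" using cC by simp
  also have "\<dots> = (CARD('n) + (CARD('n) choose 2)) - t" using tle by simp
  also have "CARD('n) + (CARD('n) choose 2) = Suc (CARD('n)) choose 2"
    by (simp add: numeral_2_eq_2)
  also have "\<dots> = CARD('n) * (CARD('n) + 1) div 2" by (simp add: choose_two mult.commute)
  finally show ?thesis .
qed

theorem proposition7p2:
  fixes C :: "(bit ^ 'n) set"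
  assumes "binary_linear_code C"
    and "\<forall>x\<in>C. x \<noteq> 0 \<longrightarrow> hamming_weight x \<ge> 4"
  defines "w4 \<equiv> card {x \<in> C. hamming_weight x = 4}"
    and "t \<equiv> card {P :: 'n set. \<exists>i j. i \<noteq> j \<and> P = {i, j} \<and>
              \<not> (\<exists>x\<in>C. hamming_weight x = 4 \<and> i \<in> code_supp x \<and> j \<in> code_supp x)}"
  shows "kissing_s (code_lattice C) = CARD('n) + 8 * w4
    \<and> perf_rank (code_lattice C) = CARD('n) * (CARD('n) + 1) div 2 - t"
proof
  have mv: "min_vectors (code_lattice C) = M1 \<union> M2 C" by (rule min_vecs[OF assms(1,2)])
  show "kissing_s (code_lattice C) = CARD('n) + 8 * w4"
    unfolding kissing_s_def mv card_M w4_def by simp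
  have "span (outer ` (M1 \<union> M2 C)) = span (mt ` DD C)"
    unfolding span_eq using outer_in_span mt_in_span by blast
  then have "dim (outer ` (M1 \<union> M2 C)) = card (mt ` DD C)"
    by (metis dim_span dim_span_eq_card_independent mt_indep)
  also have "\<dots> = card (DD C)" by (rule card_image[OF mt_inj])
  finally show "perf_rank (code_lattice C) = CARD('n) * (CARD('n) + 1) div 2 - t"
    unfolding perf_rank_def mv card_DD t_def .
qed

end
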